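(* In a minimum Walrasian equilibrium of a market with unit-demand buyers, every item $j$ with strictly positive price $p_j>0$ has a buyer that supports it.
   Context: Buyer $i$ is unit demand if there are $v_{i,j}\ge0$ with $v_i(S)=\max_{j\in S}v_{i,j}$, $v_i(\emptyset)=0$; utility is quasi-linear. A Walrasian equilibrium is a price vector $p\ge0$ and an allocation $\mathrm{win}$ assigning every item $j$ to a buyer $\mathrm{win}(j)$ such that each buyer's bundle maximizes $v_i(T)-\sum_{j\in T}p_j$ over all bundles $T$. A minimum Walrasian equilibrium is one whose price vector is coordinatewise at most that of every Walrasian equilibrium. Buyer $i$ supports the price of item $j$ if $\mathrm{win}(j)\neq i$ and either (1) there is an item $k$ with $\mathrm{win}(k)=i$ and $v_{i,k}-p_k=v_{i,j}-p_j$, or (2) buyer $i$ receives no item and $v_{i,j}=p_j$. *)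

theory Defs
  imports Complex_Main
begin

definition unit_demand_val :: "('b \<Rightarrow> 'i \<Rightarrow> real) \<Rightarrow> 'b \<Rightarrow> 'i set \<Rightarrow> real" where
  "unit_demand_val v i S = (if S = {} then 0 else Max (v i ` S))"

definition bundle_of :: "('i \<Rightarrow> 'b) \<Rightarrow> 'i set \<Rightarrow> 'b \<Rightarrow> 'i set" where
  "bundle_of win M i = {j \<in> M. win j = i}"

definition utility :: "('b \<Rightarrow> 'i \<Rightarrow> real) \<Rightarrow> ('i \<Rightarrow> real) \<Rightarrow> 'b \<Rightarrow> 'i set \<Rightarrow> real" where
  "utility v p i T = unit_demand_val v i T - (\<Sum>j\<in>T. p j)"

definition walrasian_eq ::
  "'b set \<Rightarrow> 'i set \<Rightarrow> ('b \<Rightarrow> 'i \<Rightarrow> real) \<Rightarrow> ('i \<Rightarrow> real) \<Rightarrow> ('i \<Rightarrow> 'b) \<Rightarrow> bool" where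
  "walrasian_eq B M v p win \<longleftrightarrow>
     (\<forall>j\<in>M. p j \<ge> 0) \<and>
     (\<forall>j\<in>M. win j \<in> B) \<and>
     (\<forall>i\<in>B. \<forall>T\<subseteq>M. utility v p i T \<le> utility v p i (bundle_of win M i))"

definition min_walrasian_eq ::
  "'b set \<Rightarrow> 'i set \<Rightarrow> ('b \<Rightarrow> 'i \<Rightarrow> real) \<Rightarrow> ('i \<Rightarrow> real) \<Rightarrow> ('i \<Rightarrow> 'b) \<Rightarrow> bool" where
  "min_walrasian_eq B M v p win \<longleftrightarrow>
     walrasian_eq B M v p win \<and>
     (\<forall>q win'. walrasian_eq B M v q win' \<longrightarrow> (\<forall>j\<in>M. p j \<le> q j))"

definition supports ::
  "'i set \<Rightarrow> ('b \<Rightarrow> 'i \<Rightarrow> real) \<Rightarrow> ('i \<Rightarrow> real) \<Rightarrow> ('i \<Rightarrow> 'b) \<Rightarrow> 'b \<Rightarrow> 'i \<Rightarrow> bool" where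
  "supports M v p win i j \<longleftrightarrow>
     win j \<noteq> i \<and>
     ((\<exists>k\<in>M. win k = i \<and> v i k - p k = v i j - p j) \<or>
      ((\<forall>k\<in>M. win k \<noteq> i) \<and> v i j = p j))"

end

theory Submission
  imports Defs
begin

lemma ud_attained:
  assumes "finite T" "T \<noteq> {}"
  shows "\<exists>k\<in>T. unit_demand_val v i T = v i k"
proof -
  have "Max (v i ` T) \<in> v i ` T" using assms by (intro Max_in) auto
  then obtain k where "k \<in> T" "Max (v i ` T) = v i k" by blast
  then show ?thesis using assms unfolding unit_demand_val_def by auto
qed

lemma utility_single: "utility v p i {k} = v i k - p k"
  by (simp add: utility_def unit_demand_val_def)

lemma sum_two_le:
  fixes p :: "'i \<Rightarrow> real"
  assumes "finite T" "k \<in> T" "j \<in> T" "k \<noteq> j" "\<forall>x\<in>T. p x \<ge> 0"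
  shows "p k + p j \<le> sum p T"
proof -
  have "sum p {k, j} \<le> sum p T"
    using assms by (intro sum_mono2) auto
  then show ?thesis using assms by simp
qed

theorem mainTheorem8:
  fixes B :: "'b set" and M :: "'i set" and v :: "'b \<Rightarrow> 'i \<Rightarrow> real"
    and p :: "'i \<Rightarrow> real" and win :: "'i \<Rightarrow> 'b"
  assumes "finite B" and "finite M"
    and "\<forall>i\<in>B. \<forall>j\<in>M. v i j \<ge> 0"
    and "min_walrasian_eq B M v p win"
    and "j \<in> M" and "p j > 0"
  shows "\<exists>i\<in>B. supports M v p win i j"
proof (rule ccontr)
  assume ns: "\<not> (\<exists>i\<in>B. supports M v p win i j)"
  have we: "walrasian_eq B M v p win" and minp: "\<And>q w'. walrasian_eq B M v q w' \<Longrightarrow> \<forall>j\<in>M. p j \<le> q j"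
    using assms(4) unfolding min_walrasian_eq_def by auto
  have pnn: "\<forall>x\<in>M. p x \<ge> 0" and winB: "\<forall>x\<in>M. win x \<in> B"
    and opt: "\<And>i T. i \<in> B \<Longrightarrow> T \<subseteq> M \<Longrightarrow> utility v p i T \<le> utility v p i (bundle_of win M i)"
    using we unfolding walrasian_eq_def by auto
  define U where "U i = utility v p i (bundle_of win M i)" for i
  define g where "g i = U i - (v i j - p j)" for i
  have gpos: "g i > 0" if iB: "i \<in> B" and ni: "win j \<noteq> i" for i
  proof -
    have ge: "v i j - p j \<le> U i"
      using opt[OF iB, of "{j}"] assms(5) by (simp add: U_def utility_single)
    have nsup: "\<not> supports M v p win i j" using ns iB by auto
    have ne: "U i \<noteq> v i j - p j"
    proof (cases "bundle_of win M i = {}")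
      case True
      then have "\<forall>k\<in>M. win k \<noteq> i" by (auto simp: bundle_of_def)
      then have "v i j \<noteq> p j" using nsup ni unfolding supports_def by auto
      moreover have "U i = 0" using True by (simp add: U_def utility_def unit_demand_val_def)
      ultimately show ?thesis by auto
    next
      case False
      have fin: "finite (bundle_of win M i)" using assms(2) by (simp add: bundle_of_def)
      obtain k where k: "k \<in> bundle_of win M i" "unit_demand_val v i (bundle_of win M i) = v i k"
        using ud_attained[OF fin False, of v i] by (elim bexE)
      have kM: "k \<in> M" "win k = i" using k(1) unfolding bundle_of_def by blast+
      have "p k \<le> sum p (bundle_of win M i)"
        using fin k(1) pnn by (intro member_le_sum) (auto simp: bundle_of_def)
      then have "U i \<le> v i k - p k" using k(2) by (simp add: U_def utility_def)
      moreover have "v i k - p k \<le> U i"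
        using opt[OF iB, of "{k}"] kM by (simp add: U_def utility_single)
      ultimately have "U i = v i k - p k" by simp
      moreover have "v i k - p k \<noteq> v i j - p j" using nsup ni kM unfolding supports_def by auto
      ultimately show ?thesis by simp
    qed
    show ?thesis using ge ne by (simp add: g_def)
  qed
  define S where "S = insert (p j) (g ` {i\<in>B. win j \<noteq> i})"
  have finS: "finite S" "S \<noteq> {}" using assms(1) by (auto simp: S_def)
  define eps where "eps = Min S"
  have epos: "eps > 0"
  proof -
    have "\<forall>s\<in>S. s > 0" using gpos assms(6) unfolding S_def by blast
    then show ?thesis unfolding eps_def using Min_gr_iff[OF finS] by blast
  qed
  have eple: "eps \<le> p j" unfolding eps_def using finS by (intro Min_le) (auto simp: S_def)
  have egle: "eps \<le> g i" if "i \<in> B" "win j \<noteq> i" for i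
  proof -
    have "g i \<in> S" using that unfolding S_def by blast
    then show ?thesis unfolding eps_def using finS by (intro Min_le)
  qed
  define q where "q = p(j := p j - eps)"
  have sumq: "sum q T = sum p T - (if j \<in> T then eps else 0)" if "finite T" for T
  proof (cases "j \<in> T")
    case True
    have "sum q T = q j + sum q (T - {j})" using that True by (simp add: sum.remove)
    also have "sum q (T - {j}) = sum p (T - {j})" by (intro sum.cong) (auto simp: q_def)
    also have "sum p T = p j + sum p (T - {j})" using that True by (simp add: sum.remove)
    ultimately show ?thesis using True by (simp add: q_def)
  next
    case False
    then show ?thesis by (auto simp: q_def intro!: sum.cong)
  qed
  have uq: "utility v q i T = utility v p i T + (if j \<in> T then eps else 0)" if "finite T" for i T
    using sumq[OF that] by (simp add: utility_def)
  have "walrasian_eq B M v q win"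
    unfolding walrasian_eq_def
  proof (intro conjI ballI allI impI)
    fix x assume "x \<in> M" then show "q x \<ge> 0" using pnn eple by (auto simp: q_def)
  next
    fix x assume "x \<in> M" then show "win x \<in> B" using winB by auto
  next
    fix i T assume iB: "i \<in> B" and TM: "T \<subseteq> M"
    have finT: "finite T" using TM assms(2) finite_subset by blast
    have finb: "finite (bundle_of win M i)" using assms(2) by (simp add: bundle_of_def)
    have base: "utility v p i T \<le> U i" using opt[OF iB TM] by (simp add: U_def)
    show "utility v q i T \<le> utility v q i (bundle_of win M i)"
    proof (cases "win j = i")
      case True
      then have "j \<in> bundle_of win M i" using assms(5) by (simp add: bundle_of_def)
      then show ?thesis using uq[OF finT] uq[OF finb] base epos by (auto simp: U_def)
    next
      case False
      then have jnb: "j \<notin> bundle_of win M i" by (simp add: bundle_of_def)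
      show ?thesis
      proof (cases "j \<in> T")
        case False
        then show ?thesis using uq[OF finT] uq[OF finb] base jnb by (simp add: U_def)
      next
        case jT: True
        then have Tne: "T \<noteq> {}" by auto
        obtain k where k: "k \<in> T" "unit_demand_val v i T = v i k"
          using ud_attained[OF finT Tne, of v i] by (elim bexE)
        have pT: "\<forall>x\<in>T. p x \<ge> 0" using pnn TM by auto
        have "utility v p i T + eps \<le> U i"
        proof (cases "k = j")
          case True
          have "p j \<le> sum p T" using finT jT pT by (intro member_le_sum) auto
          then have "utility v p i T \<le> v i j - p j" using k True by (simp add: utility_def)
          then show ?thesis using egle[OF iB False] by (simp add: g_def)
        next
          case kj: False
          have "p k + p j \<le> sum p T" using sum_two_le[OF finT k(1) jT kj pT] .
          then have "utility v p i T \<le> v i k - p k - p j" using k by (simp add: utility_def)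
          moreover have "v i k - p k \<le> U i"
            using opt[OF iB, of "{k}"] k(1) TM by (auto simp: U_def utility_single)
          ultimately show ?thesis using eple by simp
        qed
        then show ?thesis using uq[OF finT] uq[OF finb] jT jnb by (simp add: U_def)
      qed
    qed
  qed
  then have "p j \<le> q j" using minp assms(5) by blast
  then show False using epos by (simp add: q_def)
qed

end
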